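(* Let $X=\{x_j:j\in J\}\subset\mathbb{R}^2$ be finite with $n=|J|$. If $s\in\mathrm{conv}(\mathcal{M})$ and $s$ is equidistant from all points of $X$, then there exist weights $\tau_j\geq\frac{1}{n+1}$ ($j\in J$) with $\sum_j\tau_j=1$ and $s=\sum_j\tau_jx_j$.
   Context: $\mathcal{M}=\{M_j:j\in J\}$ with $M_j=\frac{1}{n+1}\big(x_j+\sum_{i\in J}x_i\big)$. *)

theory Defs
  imports "HOL-Analysis.Analysis"
begin

definition Mpt :: "'j set \<Rightarrow> ('j \<Rightarrow> real^2) \<Rightarrow> 'j \<Rightarrow> real^2" where
  "Mpt J x j = (1 / (real (card J) + 1)) *\<^sub>R (x j + (\<Sum>i\<in>J. x i))"

end

theory Submission
  imports Defs
begin

theorem lemma8: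
  fixes J :: "'j set" and x :: "'j \<Rightarrow> real^2" and s :: "real^2"
  assumes "finite J"
    and "inj_on x J"
    and "s \<in> convex hull (Mpt J x ` J)"
    and "\<exists>r. \<forall>j\<in>J. dist s (x j) = r"
  shows "\<exists>\<tau> :: 'j \<Rightarrow> real. (\<forall>j\<in>J. \<tau> j \<ge> 1 / (real (card J) + 1))
           \<and> (\<Sum>j\<in>J. \<tau> j) = 1 \<and> s = (\<Sum>j\<in>J. \<tau> j *\<^sub>R x j)"
proof -
  have U: "Mpt J x ` J = (\<Union>i\<in>J. {Mpt J x i})" by auto
  have "convex hull (\<Union>i\<in>J. {Mpt J x i}) =
    {sum (\<lambda>i. c i *\<^sub>R t i) J | c t. (\<forall>i\<in>J. c i \<ge> 0) \<and> sum c J = 1 \<and> (\<forall>i\<in>J. t i \<in> {Mpt J x i})}"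
    by (rule convex_hull_finite_union) (use assms(1) in auto)
  with assms(3) U obtain c t where c: "\<forall>i\<in>J. c i \<ge> 0" "sum c J = 1"
    and t: "\<forall>i\<in>J. t i \<in> {Mpt J x i}" and s: "s = sum (\<lambda>i. c i *\<^sub>R t i) J"
    by auto
  define N where "N = real (card J) + 1"
  have Npos: "N > 0" unfolding N_def by simp
  define T where "T = (\<Sum>i\<in>J. x i)"
  have "s = (\<Sum>i\<in>J. c i *\<^sub>R ((1/N) *\<^sub>R (x i + T)))"
    unfolding s N_def T_def using t by (intro sum.cong) (auto simp: Mpt_def)
  also have "\<dots> = (\<Sum>i\<in>J. (c i / N) *\<^sub>R x i) + (\<Sum>i\<in>J. (c i / N) *\<^sub>R T)"
    by (simp add: sum.distrib[symmetric] scaleR_add_right)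
  also have "(\<Sum>i\<in>J. (c i / N) *\<^sub>R T) = (sum c J / N) *\<^sub>R T"
    by (simp add: scaleR_sum_left[symmetric] sum_divide_distrib)
  also have "\<dots> = (\<Sum>i\<in>J. (1 / N) *\<^sub>R x i)"
    using c(2) by (simp add: T_def scaleR_sum_right)
  finally have "s = (\<Sum>i\<in>J. ((c i + 1) / N) *\<^sub>R x i)"
    by (simp add: sum.distrib[symmetric] scaleR_add_left[symmetric] add_divide_distrib)
  moreover have "(\<Sum>i\<in>J. (c i + 1) / N) = 1"
    using c(2) Npos by (simp add: sum_divide_distrib[symmetric] sum.distrib N_def)
  moreover have "\<forall>j\<in>J. (c j + 1) / N \<ge> 1 / N"
    using c(1) Npos by (simp add: divide_right_mono)
  ultimately show ?thesis unfolding N_def by (intro exI[of _ "\<lambda>i. (c i + 1) / (real (card J) + 1)"]) simp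
qed

end
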